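(* Let $\mathcal{R}$ be a ring and let $(\mathcal{C}^{\bullet},\partial)$ be a bigraded cochain complex of $\mathcal{R}$-modules as described in the context. Then there is a commutative diagram with exact rows and exact columns whose rows are \[ 0\to B^{1}(\mathcal{N}_{0},\overline{\partial})\hookrightarrow B^{1}(\mathcal{C},\partial)\xrightarrow{\pi_{1}} B^{1}(\mathcal{C}^{0,\bullet},\partial_{0,1})\to 0, \] \[ 0\to Z^{1}(\mathcal{N}_{0},\overline{\partial})\hookrightarrow Z^{1}(\mathcal{C},\partial)\xrightarrow{\pi_{1}} \ker(\rho_{1})\to 0, \] \[ 0\to H^{1}(\mathcal{N}_{0},\overline{\partial})\to H^{1}(\mathcal{C},\partial)\to \frac{\ker(\rho_{1})}{B^{1}(\mathcal{C}^{0,\bullet},\partial_{0,1})}\to 0, \] where the vertical maps from the first to the second row are inclusions, the vertical maps from the second to the third row are the canonical quotient projections, and the maps of the third row are the ones induced by those of the second row. In particular, $B^{1}(\mathcal{C}^{0,\bullet},\partial_{0,1})\subseteq\ker(\rho_{1})$ and the last row is a short exact sequence.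
   Context: Setting: $\mathcal{C}^{\bullet}=\bigoplus_{k\in\mathbb{Z}}\mathcal{C}^{k}$ is a graded $\mathcal{R}$-module with a compatible bigrading $\mathcal{C}^{k}=\bigoplus_{p+q=k}\mathcal{C}^{p,q}$, where $\mathcal{C}^{p,q}=\{0\}$ whenever $p<0$ or $q<0$; $\partial$ is an $\mathcal{R}$-linear map of degree $1$ with $\partial^{2}=0$, and $\partial=\partial_{2,-1}+\partial_{1,0}+\partial_{0,1}$ with $\partial_{i,j}(\mathcal{C}^{p,q})\subseteq\mathcal{C}^{p+i,q+j}$. For $\eta\in\mathcal{C}^{k}$, $\eta_{p,q}$ denotes its component in $\mathcal{C}^{p,q}$. For $q\in\mathbb{Z}$, $G^{q}\mathcal{C}:=\bigoplus_{j\geq q}\mathcal{C}^{i,j}$ and $\pi_{q}:\mathcal{C}\to G^{q}\mathcal{C}$ is the projection along the bigrading. $Z,B,H$ denote cocycles, coboundaries, cohomology; since $\partial_{0,1}^{2}=0$, $(\mathcal{C}^{0,\bullet},\partial_{0,1})$ is a cochain complex. Let $\mathcal{N}^{p,q}:=\ker(\partial_{0,1}|_{\mathcal{C}^{p,q}})\cap\ker(\partial_{2,-1}|_{\mathcal{C}^{p,q}})$ and $\mathcal{N}_{0}:=\bigoplus_{p}\mathcal{N}^{p,0}$ (so $\mathcal{N}^{p,0}=\ker(\partial_{0,1}:\mathcal{C}^{p,0}\to\mathcal{C}^{p,1})$, in degree $p$); this is a subcomplex of $(\mathcal{C},\partial)$ and $\overline{\partial}$ denotes the restriction of $\partial$ to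 it (which equals $\partial_{1,0}$ there). Let $\mathcal{A}^{k}:=\{\pi_{1}(\eta)\mid\eta\in\mathcal{C}^{k},\ \pi_{1}(\partial\eta)=0\}$. For $\xi\in\mathcal{A}^{k}$ and any $\eta\in\mathcal{C}^{k}$ with $\pi_{1}\eta=\xi$, $\pi_{1}(\partial\eta)=0$, the element $\partial_{2,-1}\xi_{k-1,1}+\partial_{1,0}\eta_{k,0}$ is a $(k+1)$-cocycle of $(\mathcal{N}_{0},\overline{\partial})$ whose cohomology class depends only on $\xi$; this defines the linear map $\rho_{k}:\mathcal{A}^{k}\to H^{k+1}(\mathcal{N}_{0},\overline{\partial})$, $\rho_{k}(\xi):=[\partial_{2,-1}\xi_{k-1,1}+\partial_{1,0}\eta_{k,0}]$. *)

theory Defs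
  imports Main "HOL-Library.Function_Algebras"
begin

text \<open>The ring R is a type 'r of class ring_1; an R-module structure
on an abelian group type 'm is a scalar multiplication s. The bigraded module
C = direct sum of the C^{p,q} is represented by families x :: int => int => 'm
with x p q in C^{p,q} (a submodule of 'm) and finite support. The component
differentials d21, d10, d01 are given on each C^{p,q}: d_ij p q maps C^{p,q}
into C^{p+i,q+j}.\<close>

definition is_lmodule :: "('r::ring_1 \<Rightarrow> 'm::ab_group_add \<Rightarrow> 'm) \<Rightarrow> bool" where
  "is_lmodule s \<longleftrightarrow>
     (\<forall>a x y. s a (x + y) = s a x + s a y) \<and>
     (\<forall>a b x. s (a + b) x = s a x + s b x) \<and>
     (\<forall>a b x. s (a * b) x = s a (s b x)) \<and>
     (\<forall>x. s 1 x = x)"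

definition is_submodule :: "('r::ring_1 \<Rightarrow> 'm::ab_group_add \<Rightarrow> 'm) \<Rightarrow> 'm set \<Rightarrow> bool" where
  "is_submodule s M \<longleftrightarrow> 0 \<in> M \<and> (\<forall>x\<in>M. \<forall>y\<in>M. x + y \<in> M) \<and>
     (\<forall>x\<in>M. - x \<in> M) \<and> (\<forall>a. \<forall>x\<in>M. s a x \<in> M)"

definition is_linear_on :: "('r::ring_1 \<Rightarrow> 'm::ab_group_add \<Rightarrow> 'm) \<Rightarrow> 'm set \<Rightarrow> 'm set \<Rightarrow> ('m \<Rightarrow> 'm) \<Rightarrow> bool" where
  "is_linear_on s M M' f \<longleftrightarrow> (\<forall>x\<in>M. f x \<in> M') \<and>
     (\<forall>x\<in>M. \<forall>y\<in>M. f (x + y) = f x + f y) \<and> (\<forall>a. \<forall>x\<in>M. f (s a x) = s a (f x))"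

definition fam :: "(int \<Rightarrow> int \<Rightarrow> 'm::zero set) \<Rightarrow> (int \<Rightarrow> int \<Rightarrow> 'm) \<Rightarrow> bool" where
  "fam Cc x \<longleftrightarrow> (\<forall>p q. x p q \<in> Cc p q) \<and> finite {(p, q). x p q \<noteq> 0}"

definition Cdeg :: "(int \<Rightarrow> int \<Rightarrow> 'm::zero set) \<Rightarrow> int \<Rightarrow> (int \<Rightarrow> int \<Rightarrow> 'm) set" where
  "Cdeg Cc k = {x. fam Cc x \<and> (\<forall>p q. p + q \<noteq> k \<longrightarrow> x p q = 0)}"

definition Dop :: "int \<Rightarrow> int \<Rightarrow> (int \<Rightarrow> int \<Rightarrow> 'm \<Rightarrow> 'm) \<Rightarrow> (int \<Rightarrow> int \<Rightarrow> 'm) \<Rightarrow> (int \<Rightarrow> int \<Rightarrow> 'm)" where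
  "Dop i j d x = (\<lambda>p q. d (p - i) (q - j) (x (p - i) (q - j)))"

definition Dtot :: "(int \<Rightarrow> int \<Rightarrow> 'm::ab_group_add \<Rightarrow> 'm) \<Rightarrow> (int \<Rightarrow> int \<Rightarrow> 'm \<Rightarrow> 'm) \<Rightarrow>
    (int \<Rightarrow> int \<Rightarrow> 'm \<Rightarrow> 'm) \<Rightarrow> (int \<Rightarrow> int \<Rightarrow> 'm) \<Rightarrow> (int \<Rightarrow> int \<Rightarrow> 'm)" where
  "Dtot d21 d10 d01 x = Dop 2 (-1) d21 x + Dop 1 0 d10 x + Dop 0 1 d01 x"

definition bigraded_complex :: "('r::ring_1 \<Rightarrow> 'm::ab_group_add \<Rightarrow> 'm) \<Rightarrow> (int \<Rightarrow> int \<Rightarrow> 'm set) \<Rightarrow>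
    (int \<Rightarrow> int \<Rightarrow> 'm \<Rightarrow> 'm) \<Rightarrow> (int \<Rightarrow> int \<Rightarrow> 'm \<Rightarrow> 'm) \<Rightarrow> (int \<Rightarrow> int \<Rightarrow> 'm \<Rightarrow> 'm) \<Rightarrow> bool" where
  "bigraded_complex s Cc d21 d10 d01 \<longleftrightarrow>
     is_lmodule s \<and>
     (\<forall>p q. is_submodule s (Cc p q)) \<and>
     (\<forall>p q. p < 0 \<or> q < 0 \<longrightarrow> Cc p q = {0}) \<and>
     (\<forall>p q. is_linear_on s (Cc p q) (Cc (p + 2) (q - 1)) (d21 p q)) \<and>
     (\<forall>p q. is_linear_on s (Cc p q) (Cc (p + 1) q) (d10 p q)) \<and>
     (\<forall>p q. is_linear_on s (Cc p q) (Cc p (q + 1)) (d01 p q)) \<and>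
     (\<forall>x. fam Cc x \<longrightarrow> Dtot d21 d10 d01 (Dtot d21 d10 d01 x) = 0)"

definition proj :: "int \<Rightarrow> (int \<Rightarrow> int \<Rightarrow> 'm::zero) \<Rightarrow> (int \<Rightarrow> int \<Rightarrow> 'm)" where
  "proj q0 x = (\<lambda>i j. if j \<ge> q0 then x i j else 0)"

text \<open>Cocycles, coboundaries and cohomology of a cochain complex given by its
degree-k pieces S k and differential D. Cohomology classes are cosets.\<close>

definition cocyc :: "(int \<Rightarrow> 'a::ab_group_add set) \<Rightarrow> ('a \<Rightarrow> 'a) \<Rightarrow> int \<Rightarrow> 'a set" where
  "cocyc S D k = {x \<in> S k. D x = 0}"

definition cobd :: "(int \<Rightarrow> 'a::ab_group_add set) \<Rightarrow> ('a \<Rightarrow> 'a) \<Rightarrow> int \<Rightarrow> 'a set" where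
  "cobd S D k = D ` S (k - 1)"

definition coset :: "'a::ab_group_add set \<Rightarrow> 'a \<Rightarrow> 'a set" where
  "coset B x = (\<lambda>b. x + b) ` B"

definition quot :: "'a::ab_group_add set \<Rightarrow> 'a set \<Rightarrow> 'a set set" where
  "quot A B = coset B ` A"

definition cohom :: "(int \<Rightarrow> 'a::ab_group_add set) \<Rightarrow> ('a \<Rightarrow> 'a) \<Rightarrow> int \<Rightarrow> 'a set set" where
  "cohom S D k = quot (cocyc S D k) (cobd S D k)"

definition Npq :: "(int \<Rightarrow> int \<Rightarrow> 'm::zero set) \<Rightarrow> (int \<Rightarrow> int \<Rightarrow> 'm \<Rightarrow> 'm) \<Rightarrow> (int \<Rightarrow> int \<Rightarrow> 'm \<Rightarrow> 'm) \<Rightarrow> int \<Rightarrow> int \<Rightarrow> 'm set" where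
  "Npq Cc d21 d01 p q = {c \<in> Cc p q. d01 p q c = 0 \<and> d21 p q c = 0}"

definition N0deg :: "(int \<Rightarrow> int \<Rightarrow> 'm::zero set) \<Rightarrow> (int \<Rightarrow> int \<Rightarrow> 'm \<Rightarrow> 'm) \<Rightarrow> (int \<Rightarrow> int \<Rightarrow> 'm \<Rightarrow> 'm) \<Rightarrow> int \<Rightarrow> (int \<Rightarrow> int \<Rightarrow> 'm) set" where
  "N0deg Cc d21 d01 k = {x \<in> Cdeg Cc k. (\<forall>p q. q \<noteq> 0 \<longrightarrow> x p q = 0) \<and> (\<forall>p. x p 0 \<in> Npq Cc d21 d01 p 0)}"

definition C0deg :: "(int \<Rightarrow> int \<Rightarrow> 'm::zero set) \<Rightarrow> int \<Rightarrow> (int \<Rightarrow> int \<Rightarrow> 'm) set" where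
  "C0deg Cc k = {x \<in> Cdeg Cc k. \<forall>p q. p \<noteq> 0 \<longrightarrow> x p q = 0}"

definition Aset :: "(int \<Rightarrow> int \<Rightarrow> 'm::ab_group_add set) \<Rightarrow> (int \<Rightarrow> int \<Rightarrow> 'm \<Rightarrow> 'm) \<Rightarrow> (int \<Rightarrow> int \<Rightarrow> 'm \<Rightarrow> 'm) \<Rightarrow>
    (int \<Rightarrow> int \<Rightarrow> 'm \<Rightarrow> 'm) \<Rightarrow> int \<Rightarrow> (int \<Rightarrow> int \<Rightarrow> 'm) set" where
  "Aset Cc d21 d10 d01 k = {proj 1 \<eta> | \<eta>. \<eta> \<in> Cdeg Cc k \<and> proj 1 (Dtot d21 d10 d01 \<eta>) = 0}"

definition rho :: "(int \<Rightarrow> int \<Rightarrow> 'm::ab_group_add set) \<Rightarrow> (int \<Rightarrow> int \<Rightarrow> 'm \<Rightarrow> 'm) \<Rightarrow> (int \<Rightarrow> int \<Rightarrow> 'm \<Rightarrow> 'm) \<Rightarrow>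
    (int \<Rightarrow> int \<Rightarrow> 'm \<Rightarrow> 'm) \<Rightarrow> int \<Rightarrow> (int \<Rightarrow> int \<Rightarrow> 'm) \<Rightarrow> (int \<Rightarrow> int \<Rightarrow> 'm) set" where
  "rho Cc d21 d10 d01 k \<xi> =
     (let \<eta> = (SOME \<eta>. \<eta> \<in> Cdeg Cc k \<and> proj 1 \<eta> = \<xi> \<and> proj 1 (Dtot d21 d10 d01 \<eta>) = 0)
      in coset (cobd (N0deg Cc d21 d01) (Dtot d21 d10 d01) (k + 1))
           (\<lambda>p q. if p = k + 1 \<and> q = 0 then d21 (k - 1) 1 (\<xi> (k - 1) 1) + d10 k 0 (\<eta> k 0) else 0))"

definition ker_rho :: "(int \<Rightarrow> int \<Rightarrow> 'm::ab_group_add set) \<Rightarrow> (int \<Rightarrow> int \<Rightarrow> 'm \<Rightarrow> 'm) \<Rightarrow> (int \<Rightarrow> int \<Rightarrow> 'm \<Rightarrow> 'm) \<Rightarrow>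
    (int \<Rightarrow> int \<Rightarrow> 'm \<Rightarrow> 'm) \<Rightarrow> int \<Rightarrow> (int \<Rightarrow> int \<Rightarrow> 'm) set" where
  "ker_rho Cc d21 d10 d01 k = {\<xi> \<in> Aset Cc d21 d10 d01 k.
      rho Cc d21 d10 d01 k \<xi> = coset (cobd (N0deg Cc d21 d01) (Dtot d21 d10 d01) (k + 1)) 0}"

definition short_exact :: "'a set \<Rightarrow> 'b set \<Rightarrow> 'c set \<Rightarrow> ('a \<Rightarrow> 'b) \<Rightarrow> ('b \<Rightarrow> 'c) \<Rightarrow> 'a \<Rightarrow> 'b \<Rightarrow> 'c \<Rightarrow> bool" where
  "short_exact A B C f g zA zB zC \<longleftrightarrow>
     zA \<in> A \<and> zB \<in> B \<and> zC \<in> C \<and> f ` A \<subseteq> B \<and> g ` B \<subseteq> C \<and>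
     {a \<in> A. f a = zB} = {zA} \<and> {b \<in> B. g b = zC} = f ` A \<and> g ` B = C"

end

theory Submission
  imports Defs
begin

definition sg :: "'a::ab_group_add set \<Rightarrow> bool" where
  "sg B \<longleftrightarrow> 0 \<in> B \<and> (\<forall>x\<in>B. \<forall>y\<in>B. x + y \<in> B) \<and> (\<forall>x\<in>B. - x \<in> B)"

lemma sg_diff: "sg B \<Longrightarrow> x \<in> B \<Longrightarrow> y \<in> B \<Longrightarrow> x - y \<in> B"
proof -
  assume a: "sg B" "x \<in> B" "y \<in> B"
  hence "- y \<in> B" unfolding sg_def by blast
  hence "x + - y \<in> B" using a unfolding sg_def by blast
  thus "x - y \<in> B" by simp
qed

lemma coset_eq: assumes "sg B" shows "coset B x = coset B y \<longleftrightarrow> x - y \<in> B"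
proof
  assume "coset B x = coset B y"
  moreover have "x \<in> coset B x" unfolding coset_def
    using image_eqI[of x "\<lambda>b. x + b" 0 B] assms unfolding sg_def by simp
  ultimately obtain b where "b \<in> B" "x = y + b" unfolding coset_def by auto
  thus "x - y \<in> B" by simp
next
  assume h: "x - y \<in> B"
  have "coset B x \<subseteq> coset B y" if "x - y \<in> B" for x y
  proof
    fix z assume "z \<in> coset B x"
    then obtain b where b: "b \<in> B" "z = x + b" unfolding coset_def by auto
    have "(x - y) + b \<in> B" using assms b that unfolding sg_def by blast
    moreover have "z = (\<lambda>b. y + b) ((x - y) + b)" using b by simp
    ultimately show "z \<in> coset B y" unfolding coset_def by blast
  qed
  moreover have "- (x - y) \<in> B" using h assms unfolding sg_def by blast
  hence "y - x \<in> B" by simp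
  ultimately show "coset B x = coset B y" using h by blast
qed

lemma coset_0: "coset B 0 = B" unfolding coset_def by simp

lemma coset_some: assumes "sg B" shows "(SOME x. x \<in> coset B z) - z \<in> B"
proof -
  have "z \<in> coset B z" unfolding coset_def
    using image_eqI[of z "\<lambda>b. z + b" 0 B] assms unfolding sg_def by simp
  hence "(SOME x. x \<in> coset B z) \<in> coset B z" by (rule someI)
  then obtain b where "b \<in> B" "(SOME x. x \<in> coset B z) = z + b" unfolding coset_def by auto
  thus ?thesis by simp
qed

lemma column: assumes "sg B" "B \<subseteq> Z"
  shows "short_exact B Z (quot Z B) id (coset B) 0 0 (coset B 0)"
proof -
  have z: "0 \<in> B" using assms(1) unfolding sg_def by blast
  have "{b \<in> Z. coset B b = coset B 0} = B" using coset_eq[OF assms(1)] assms(2) by auto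
  thus ?thesis unfolding short_exact_def quot_def using z assms(2) by auto
qed

locale bc =
  fixes s :: "'r::ring_1 \<Rightarrow> 'm::ab_group_add \<Rightarrow> 'm" and Cc :: "int \<Rightarrow> int \<Rightarrow> 'm set"
    and d21 d10 d01 :: "int \<Rightarrow> int \<Rightarrow> 'm \<Rightarrow> 'm"
  assumes bc: "bigraded_complex s Cc d21 d10 d01"
begin

abbreviation "D \<equiv> Dtot d21 d10 d01"

lemma subm: "is_submodule s (Cc p q)" using bc unfolding bigraded_complex_def by blast
lemma C0[simp]: "0 \<in> Cc p q" using subm unfolding is_submodule_def by blast
lemma Cadd[simp]: "x \<in> Cc p q \<Longrightarrow> y \<in> Cc p q \<Longrightarrow> x + y \<in> Cc p q" using subm unfolding is_submodule_def by blast
lemma Cneg[simp]: "x \<in> Cc p q \<Longrightarrow> - x \<in> Cc p q" using subm unfolding is_submodule_def by blast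
lemma Cdiff[simp]: assumes "x \<in> Cc p q" "y \<in> Cc p q" shows "x - y \<in> Cc p q"
  using Cadd[OF assms(1) Cneg[OF assms(2)]] by simp
lemma Cnegidx: "x \<in> Cc p q \<Longrightarrow> p < 0 \<or> q < 0 \<Longrightarrow> x = 0"
  using bc unfolding bigraded_complex_def by blast

lemma lin21: "is_linear_on s (Cc p q) (Cc (p + 2) (q - 1)) (d21 p q)" using bc unfolding bigraded_complex_def by blast
lemma lin10: "is_linear_on s (Cc p q) (Cc (p + 1) q) (d10 p q)" using bc unfolding bigraded_complex_def by blast
lemma lin01: "is_linear_on s (Cc p q) (Cc p (q + 1)) (d01 p q)" using bc unfolding bigraded_complex_def by blast

lemma lin_zero: assumes "is_linear_on s M M' f" "0 \<in> M" shows "f 0 = 0"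
proof -
  have "f (0 + 0) = f 0 + f 0" using assms unfolding is_linear_on_def by blast
  thus ?thesis by simp
qed
lemma lin_diff: "is_linear_on s M M' f \<Longrightarrow> is_submodule s M \<Longrightarrow> x \<in> M \<Longrightarrow> y \<in> M \<Longrightarrow> f (x - y) = f x - f y"
proof -
  assume a: "is_linear_on s M M' f" "is_submodule s M" "x \<in> M" "y \<in> M"
  have "- y \<in> M" using a unfolding is_submodule_def by blast
  hence "x + - y \<in> M" using a unfolding is_submodule_def by blast
  hence m: "x - y \<in> M" by simp
  have "f ((x - y) + y) = f (x - y) + f y" using a(1) m a(4) unfolding is_linear_on_def by blast
  thus "f (x - y) = f x - f y" by simp
qed

lemma d0[simp]: "d21 p q 0 = 0" "d10 p q 0 = 0" "d01 p q 0 = 0"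
  using lin_zero[OF lin21] lin_zero[OF lin10] lin_zero[OF lin01] by auto
lemma dadd: "x \<in> Cc p q \<Longrightarrow> y \<in> Cc p q \<Longrightarrow> d21 p q (x + y) = d21 p q x + d21 p q y"
  "x \<in> Cc p q \<Longrightarrow> y \<in> Cc p q \<Longrightarrow> d10 p q (x + y) = d10 p q x + d10 p q y"
  "x \<in> Cc p q \<Longrightarrow> y \<in> Cc p q \<Longrightarrow> d01 p q (x + y) = d01 p q x + d01 p q y"
  using lin21 lin10 lin01 unfolding is_linear_on_def by blast+
lemma ddiff: "x \<in> Cc p q \<Longrightarrow> y \<in> Cc p q \<Longrightarrow> d21 p q (x - y) = d21 p q x - d21 p q y"
  "x \<in> Cc p q \<Longrightarrow> y \<in> Cc p q \<Longrightarrow> d10 p q (x - y) = d10 p q x - d10 p q y"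
  "x \<in> Cc p q \<Longrightarrow> y \<in> Cc p q \<Longrightarrow> d01 p q (x - y) = d01 p q x - d01 p q y"
  using lin_diff[OF lin21 subm] lin_diff[OF lin10 subm] lin_diff[OF lin01 subm] by blast+
lemma dmem21: "x \<in> Cc p q \<Longrightarrow> d21 p q x \<in> Cc (p + 2) (q - 1)"
  using lin21 unfolding is_linear_on_def by blast
lemma dmem10: "x \<in> Cc p q \<Longrightarrow> d10 p q x \<in> Cc (p + 1) q"
  using lin10 unfolding is_linear_on_def by blast
lemma dmem01: "x \<in> Cc p q \<Longrightarrow> d01 p q x \<in> Cc p (q + 1)"
  using lin01 unfolding is_linear_on_def by blast
lemmas dmem = dmem21 dmem10 dmem01

lemma D_apply: "D x p q = d21 (p-2) (q+1) (x (p-2) (q+1)) + d10 (p-1) q (x (p-1) q) + d01 p (q-1) (x p (q-1))"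
  unfolding Dtot_def Dop_def by simp

lemma Cdeg_iff: "x \<in> Cdeg Cc k \<longleftrightarrow> (\<forall>p q. x p q \<in> Cc p q) \<and> (\<forall>p q. p + q \<noteq> k \<longrightarrow> x p q = 0)"
proof -
  have "finite {(p, q). x p q \<noteq> 0}" if "\<forall>p q. x p q \<in> Cc p q" "\<forall>p q. p + q \<noteq> k \<longrightarrow> x p q = 0"
  proof (rule finite_subset)
    show "{(p, q). x p q \<noteq> 0} \<subseteq> {0..k} \<times> {0..k}"
    proof clarify
      fix p q assume "x p q \<noteq> 0"
      have "p + q = k" using that(2) \<open>x p q \<noteq> 0\<close> by blast
      moreover have "\<not> (p < 0 \<or> q < 0)" using Cnegidx[OF that(1)[rule_format, of p q]] \<open>x p q \<noteq> 0\<close> by blast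
      ultimately have "p + q = k" "p \<ge> 0" "q \<ge> 0" by auto
      thus "p \<in> {0..k} \<and> q \<in> {0..k}" by auto
    qed
  qed auto
  thus ?thesis unfolding Cdeg_def fam_def by auto
qed

lemma Cdeg_mem: "x \<in> Cdeg Cc k \<Longrightarrow> x p q \<in> Cc p q" using Cdeg_iff by blast
lemma Cdeg_z: "x \<in> Cdeg Cc k \<Longrightarrow> p + q \<noteq> k \<Longrightarrow> x p q = 0" using Cdeg_iff by blast
lemma Cdeg_neg: "x \<in> Cdeg Cc k \<Longrightarrow> p < 0 \<or> q < 0 \<Longrightarrow> x p q = 0" using Cdeg_iff Cnegidx by blast

lemma Cdeg_0[simp]: "0 \<in> Cdeg Cc k" by (simp add: Cdeg_iff)
lemma Cdeg_add: "x \<in> Cdeg Cc k \<Longrightarrow> y \<in> Cdeg Cc k \<Longrightarrow> x + y \<in> Cdeg Cc k" by (simp add: Cdeg_iff)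
lemma Cdeg_diff: "x \<in> Cdeg Cc k \<Longrightarrow> y \<in> Cdeg Cc k \<Longrightarrow> x - y \<in> Cdeg Cc k" by (simp add: Cdeg_iff)
lemma Cdeg_uminus: "x \<in> Cdeg Cc k \<Longrightarrow> - x \<in> Cdeg Cc k" by (simp add: Cdeg_iff)

lemma D_Cdeg: assumes "x \<in> Cdeg Cc k" shows "D x \<in> Cdeg Cc (k + 1)"
  unfolding Cdeg_iff D_apply
proof safe
  fix p q
  show "d21 (p - 2) (q + 1) (x (p - 2) (q + 1)) + d10 (p - 1) q (x (p - 1) q) + d01 p (q - 1) (x p (q - 1)) \<in> Cc p q"
  proof -
    have a: "d21 (p - 2) (q + 1) (x (p - 2) (q + 1)) \<in> Cc p q"
      using dmem21[OF Cdeg_mem[OF assms, of "p - 2" "q + 1"]] by simp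
    have b: "d10 (p - 1) q (x (p - 1) q) \<in> Cc p q"
      using dmem10[OF Cdeg_mem[OF assms, of "p - 1" q]] by simp
    have c: "d01 p (q - 1) (x p (q - 1)) \<in> Cc p q"
      using dmem01[OF Cdeg_mem[OF assms, of p "q - 1"]] by simp
    show ?thesis using Cadd[OF Cadd[OF a b] c] .
  qed
next
  fix p q assume "p + q \<noteq> k + 1"
  thus "d21 (p - 2) (q + 1) (x (p - 2) (q + 1)) + d10 (p - 1) q (x (p - 1) q) + d01 p (q - 1) (x p (q - 1)) = 0"
    using Cdeg_z[OF assms] by simp
qed

lemma D_diff: "x \<in> Cdeg Cc k \<Longrightarrow> y \<in> Cdeg Cc k \<Longrightarrow> D (x - y) = D x - D y"
  by (rule ext)+ (simp add: D_apply ddiff Cdeg_mem)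
lemma D_add: "x \<in> Cdeg Cc k \<Longrightarrow> y \<in> Cdeg Cc k \<Longrightarrow> D (x + y) = D x + D y"
  by (rule ext)+ (simp add: D_apply dadd Cdeg_mem)
lemma D_0[simp]: "D 0 = 0" by (rule ext)+ (simp add: D_apply)
lemma D_uminus: "x \<in> Cdeg Cc k \<Longrightarrow> D (- x) = - D x"
  using D_diff[of 0 k x] by simp

lemma DD: "x \<in> Cdeg Cc k \<Longrightarrow> D (D x) = 0"
  using bc unfolding bigraded_complex_def Cdeg_def by blast


lemma supp0: "x \<in> Cdeg Cc 0 \<Longrightarrow> x p q \<noteq> 0 \<Longrightarrow> p = 0 \<and> q = 0"
  using Cdeg_z[of x 0 p q] Cdeg_neg[of x 0 p q] by linarith
lemma supp1: "x \<in> Cdeg Cc 1 \<Longrightarrow> x p q \<noteq> 0 \<Longrightarrow> (p = 1 \<and> q = 0) \<or> (p = 0 \<and> q = 1)"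
  using Cdeg_z[of x 1 p q] Cdeg_neg[of x 1 p q] by linarith
lemma supp2: "x \<in> Cdeg Cc 2 \<Longrightarrow> x p q \<noteq> 0 \<Longrightarrow> (p = 2 \<and> q = 0) \<or> (p = 1 \<and> q = 1) \<or> (p = 0 \<and> q = 2)"
  using Cdeg_z[of x 2 p q] Cdeg_neg[of x 2 p q] by linarith

lemma sg_Cdeg: "sg (Cdeg Cc k)" unfolding sg_def using Cdeg_add Cdeg_uminus by auto

lemma d01_uminus: "a \<in> Cc p q \<Longrightarrow> d01 p q (- a) = - d01 p q a"
  using ddiff(3)[of 0 p q a] by simp

lemma N0_iff: "x \<in> N0deg Cc d21 d01 k \<longleftrightarrow> x \<in> Cdeg Cc k \<and> (\<forall>p q. q \<noteq> 0 \<longrightarrow> x p q = 0) \<and> (\<forall>p. d01 p 0 (x p 0) = 0)"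
proof -
  have "d21 p 0 (x p 0) = 0" if "x \<in> Cdeg Cc k" for p
    using Cnegidx[OF dmem21[OF Cdeg_mem[OF that, of p 0]]] by simp
  thus ?thesis unfolding N0deg_def Npq_def using Cdeg_mem by blast
qed

lemma sg_N0: "sg (N0deg Cc d21 d01 k)"
  unfolding sg_def
proof (intro conjI ballI)
  show "0 \<in> N0deg Cc d21 d01 k" unfolding N0_iff by simp
next
  fix x y assume "x \<in> N0deg Cc d21 d01 k" "y \<in> N0deg Cc d21 d01 k"
  hence x: "x \<in> Cdeg Cc k" "\<forall>p q. q \<noteq> 0 \<longrightarrow> x p q = 0" "\<forall>p. d01 p 0 (x p 0) = 0"
    and y: "y \<in> Cdeg Cc k" "\<forall>p q. q \<noteq> 0 \<longrightarrow> y p q = 0" "\<forall>p. d01 p 0 (y p 0) = 0"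
    unfolding N0_iff by blast+
  have "d01 p 0 (x p 0 + y p 0) = 0" for p
    using dadd(3)[OF Cdeg_mem[OF x(1)] Cdeg_mem[OF y(1)], of p 0] x(3) y(3) by simp
  thus "x + y \<in> N0deg Cc d21 d01 k" unfolding N0_iff using Cdeg_add[OF x(1) y(1)] x(2) y(2) by simp
next
  fix x assume "x \<in> N0deg Cc d21 d01 k"
  hence x: "x \<in> Cdeg Cc k" "\<forall>p q. q \<noteq> 0 \<longrightarrow> x p q = 0" "\<forall>p. d01 p 0 (x p 0) = 0"
    unfolding N0_iff by blast+
  have "d01 p 0 (- x p 0) = 0" for p
    using d01_uminus[OF Cdeg_mem[OF x(1)], of p 0] x(3) by simp
  thus "- x \<in> N0deg Cc d21 d01 k" unfolding N0_iff using Cdeg_uminus[OF x(1)] x(2) by simp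
qed

lemma sg_hom0: fixes f :: "'a::ab_group_add \<Rightarrow> 'b::ab_group_add"
  assumes "sg S" "\<And>x y. x \<in> S \<Longrightarrow> y \<in> S \<Longrightarrow> f (x + y) = f x + f y"
  shows "f 0 = 0"
proof -
  have z: "0 \<in> S" using assms(1) unfolding sg_def by blast
  have "f (0 + 0) = f 0 + f 0" using assms(2)[OF z z] .
  thus "f 0 = 0" by simp
qed

lemma sg_homm: fixes f :: "'a::ab_group_add \<Rightarrow> 'b::ab_group_add"
  assumes "sg S" "\<And>x y. x \<in> S \<Longrightarrow> y \<in> S \<Longrightarrow> f (x + y) = f x + f y" "x \<in> S"
  shows "f (- x) = - f x"
proof -
  have f0: "f 0 = 0" by (rule sg_hom0[OF assms(1,2)])
  have "- x \<in> S" using assms(1,3) unfolding sg_def by blast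
  hence "f (x + - x) = f x + f (- x)" using assms(2)[OF assms(3)] by blast
  hence "f x + f (- x) = 0" using f0 by simp
  hence "- f x = f (- x)" by (rule minus_unique)
  thus "f (- x) = - f x" by simp
qed

lemmas sg_hom = sg_hom0 sg_homm

lemma sg_img: fixes f :: "'a::ab_group_add \<Rightarrow> 'b::ab_group_add" assumes "sg S" "\<And>x y. x \<in> S \<Longrightarrow> y \<in> S \<Longrightarrow> f (x + y) = f x + f y"
  shows "sg (f ` S)"
  unfolding sg_def
proof (intro conjI ballI)
  have z: "0 \<in> S" using assms(1) unfolding sg_def by blast
  have "0 = f 0" using sg_hom0[OF assms] by simp
  thus "0 \<in> f ` S" using z by (rule image_eqI)
next
  fix a b assume "a \<in> f ` S" "b \<in> f ` S"
  then obtain x y where xy: "x \<in> S" "y \<in> S" "a = f x" "b = f y" by blast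
  have "a + b = f (x + y)" using assms(2)[OF xy(1,2)] xy by simp
  moreover have "x + y \<in> S" using assms(1) xy unfolding sg_def by blast
  ultimately show "a + b \<in> f ` S" by (rule image_eqI)
next
  fix a assume "a \<in> f ` S"
  then obtain x where xy: "x \<in> S" "a = f x" by blast
  have "- a = f (- x)" using sg_hom(2)[OF assms xy(1)] xy by simp
  moreover have "- x \<in> S" using assms(1) xy unfolding sg_def by blast
  ultimately show "- a \<in> f ` S" by (rule image_eqI)
qed

lemma sg_ker: fixes f :: "'a::ab_group_add \<Rightarrow> 'b::ab_group_add" assumes "sg S" "\<And>x y. x \<in> S \<Longrightarrow> y \<in> S \<Longrightarrow> f (x + y) = f x + f y"
  shows "sg {x \<in> S. f x = 0}"
  unfolding sg_def
proof (intro conjI ballI)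
  show "0 \<in> {x \<in> S. f x = 0}" using sg_hom0[OF assms] assms(1) unfolding sg_def by blast
next
  fix x y assume "x \<in> {x \<in> S. f x = 0}" "y \<in> {x \<in> S. f x = 0}"
  hence h: "x \<in> S" "y \<in> S" "f x = 0" "f y = 0" by auto
  have "x + y \<in> S" using h assms(1) unfolding sg_def by blast
  thus "x + y \<in> {x \<in> S. f x = 0}" using assms(2)[OF h(1,2)] h by simp
next
  fix x assume "x \<in> {x \<in> S. f x = 0}"
  hence h: "x \<in> S" "f x = 0" by auto
  have "- x \<in> S" using h assms(1) unfolding sg_def by blast
  thus "- x \<in> {x \<in> S. f x = 0}" using sg_hom(2)[OF assms h(1)] h by simp
qed

lemma N0_Cdeg: "x \<in> N0deg Cc d21 d01 k \<Longrightarrow> x \<in> Cdeg Cc k" using N0_iff by blast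

lemma sg_BN: "sg (cobd (N0deg Cc d21 d01) D k)"
  unfolding cobd_def by (rule sg_img[OF sg_N0]) (rule D_add, (rule N0_Cdeg, assumption)+)
lemma sg_BC: "sg (cobd (Cdeg Cc) D k)"
  unfolding cobd_def by (rule sg_img[OF sg_Cdeg]) (rule D_add, assumption+)
lemma sg_ZN: "sg (cocyc (N0deg Cc d21 d01) D k)"
  unfolding cocyc_def by (rule sg_ker[OF sg_N0]) (rule D_add, (rule N0_Cdeg, assumption)+)
lemma sg_ZC: "sg (cocyc (Cdeg Cc) D k)"
  unfolding cocyc_def by (rule sg_ker[OF sg_Cdeg]) (rule D_add, assumption+)

lemma C0_eq: "C0deg Cc 0 = Cdeg Cc 0"
proof -
  have "\<forall>p q. p \<noteq> 0 \<longrightarrow> x p q = 0" if "x \<in> Cdeg Cc 0" for x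
  proof (intro allI impI)
    fix p q :: int assume "p \<noteq> 0"
    thus "x p q = 0" using supp0[OF that, of p q] by auto
  qed
  thus ?thesis unfolding C0deg_def by auto
qed

lemma D01_add: "x \<in> Cdeg Cc k \<Longrightarrow> y \<in> Cdeg Cc k \<Longrightarrow> Dop 0 1 d01 (x + y) = Dop 0 1 d01 x + Dop 0 1 d01 y"
  by (rule ext)+ (simp add: Dop_def dadd Cdeg_mem)
lemma B0_eq0: "cobd (C0deg Cc) (Dop 0 1 d01) 1 = Dop 0 1 d01 ` Cdeg Cc 0"
  unfolding cobd_def using C0_eq by simp
lemma sg_B0: "sg (cobd (C0deg Cc) (Dop 0 1 d01) 1)"
  unfolding B0_eq0 by (rule sg_img[OF sg_Cdeg]) (rule D01_add, assumption+)

lemma proj_apply: "proj q0 x p q = (if q \<ge> q0 then x p q else 0)" by (simp add: proj_def)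
lemma proj_diff: fixes x y :: "int \<Rightarrow> int \<Rightarrow> 'a::ab_group_add" shows "proj q0 (x - y) = proj q0 x - proj q0 y" by (rule ext)+ (simp add: proj_def)
lemma proj_0[simp]: "proj q0 0 = 0" by (rule ext)+ (simp add: proj_def)

lemma projD0: assumes "x \<in> Cdeg Cc 0" shows "proj 1 (D x) = Dop 0 1 d01 x"
proof (rule ext, rule ext)
  fix p q :: int
  have a: "x a b = 0" if "a \<noteq> 0 \<or> b \<noteq> 0" for a b using supp0[OF assms] that by blast
  show "proj 1 (D x) p q = Dop 0 1 d01 x p q"
  proof (cases "q \<ge> 1")
    case True
    have "q + 1 \<noteq> 0" "q \<noteq> 0" using True by linarith+
    hence "x (p - 2) (q + 1) = 0" "x (p - 1) q = 0" using a by blast+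
    thus ?thesis using True unfolding proj_apply D_apply Dop_def by simp
  next
    case False
    have "q - 1 \<noteq> 0" using False by linarith
    hence "x p (q - 1) = 0" using a by blast
    thus ?thesis using False unfolding proj_apply D_apply Dop_def by simp
  qed
qed

lemma N0_1_iff: "x \<in> N0deg Cc d21 d01 1 \<longleftrightarrow> x \<in> Cdeg Cc 1 \<and> x 0 1 = 0 \<and> d01 1 0 (x 1 0) = 0"
proof -
  have A: "\<forall>p q. q \<noteq> 0 \<longrightarrow> x p q = 0" if "x \<in> Cdeg Cc 1" "x 0 1 = 0"
  proof (intro allI impI)
    fix p q :: int assume q: "q \<noteq> 0"
    show "x p q = 0"
    proof (rule ccontr)
      assume n: "x p q \<noteq> 0"
      hence "p = 0 \<and> q = 1" using supp1[OF that(1) n] q by blast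
      thus False using that(2) n by simp
    qed
  qed
  have B: "\<forall>p. d01 p 0 (x p 0) = 0" if "x \<in> Cdeg Cc 1" "d01 1 0 (x 1 0) = 0"
  proof
    fix p show "d01 p 0 (x p 0) = 0"
    proof (cases "p = 1")
      case True thus ?thesis using that by simp
    next
      case False hence "x p 0 = 0" using supp1[OF that(1), of p 0] by auto
      thus ?thesis by simp
    qed
  qed
  show ?thesis unfolding N0_iff
  proof
    assume h: "x \<in> Cdeg Cc 1 \<and> (\<forall>p q. q \<noteq> 0 \<longrightarrow> x p q = 0) \<and> (\<forall>p. d01 p 0 (x p 0) = 0)"
    have "x 0 1 = 0" using h[THEN conjunct2, THEN conjunct1, rule_format, of 1 0] by simp
    moreover have "d01 1 0 (x 1 0) = 0" using h by blast
    ultimately show "x \<in> Cdeg Cc 1 \<and> x 0 1 = 0 \<and> d01 1 0 (x 1 0) = 0" using h by blast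
  next
    assume h: "x \<in> Cdeg Cc 1 \<and> x 0 1 = 0 \<and> d01 1 0 (x 1 0) = 0"
    show "x \<in> Cdeg Cc 1 \<and> (\<forall>p q. q \<noteq> 0 \<longrightarrow> x p q = 0) \<and> (\<forall>p. d01 p 0 (x p 0) = 0)"
      using h A B by blast
  qed
qed

lemma N0_0_iff: "x \<in> N0deg Cc d21 d01 0 \<longleftrightarrow> x \<in> Cdeg Cc 0 \<and> d01 0 0 (x 0 0) = 0"
proof -
  have A: "\<forall>p q. q \<noteq> 0 \<longrightarrow> x p q = 0" if "x \<in> Cdeg Cc 0"
    using supp0[OF that] by blast
  have B: "\<forall>p. d01 p 0 (x p 0) = 0" if "x \<in> Cdeg Cc 0" "d01 0 0 (x 0 0) = 0"
  proof
    fix p show "d01 p 0 (x p 0) = 0"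
    proof (cases "p = 0")
      case True thus ?thesis using that by simp
    next
      case False hence "x p 0 = 0" using supp0[OF that(1), of p 0] by auto
      thus ?thesis by simp
    qed
  qed
  show ?thesis unfolding N0_iff using A B by blast
qed

lemma BN_sub_ZN: "cobd (N0deg Cc d21 d01) D 1 \<subseteq> cocyc (N0deg Cc d21 d01) D 1"
proof
  fix z assume "z \<in> cobd (N0deg Cc d21 d01) D 1"
  then obtain x where x: "x \<in> N0deg Cc d21 d01 0" and z: "z = D x" unfolding cobd_def by auto
  have xC: "x \<in> Cdeg Cc 0" and x0: "d01 0 0 (x 0 0) = 0" using x N0_0_iff by auto
  have Dx: "D x \<in> Cdeg Cc 1" using D_Cdeg[OF xC] by simp
  have e1: "D x 0 1 = 0" by (simp add: D_apply Cdeg_neg[OF xC] x0)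
  have "D (D x) 1 1 = 0" using DD[OF xC] by simp
  hence "d01 1 0 (D x 1 0) = 0" using e1 by (simp add: D_apply[of "D x" 1 1] Cdeg_neg[OF Dx])
  hence "D x \<in> N0deg Cc d21 d01 1" using N0_1_iff Dx e1 by blast
  thus "z \<in> cocyc (N0deg Cc d21 d01) D 1" unfolding cocyc_def z using DD[OF xC] by simp
qed

lemma BC_sub_ZC: "cobd (Cdeg Cc) D 1 \<subseteq> cocyc (Cdeg Cc) D 1"
proof
  fix z assume "z \<in> cobd (Cdeg Cc) D 1"
  then obtain x where x: "x \<in> Cdeg Cc 0" and z: "z = D x" unfolding cobd_def by auto
  show "z \<in> cocyc (Cdeg Cc) D 1" unfolding cocyc_def z using D_Cdeg[OF x] DD[OF x] by simp
qed

lemma ZN_sub_ZC: "cocyc (N0deg Cc d21 d01) D 1 \<subseteq> cocyc (Cdeg Cc) D 1"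
  unfolding cocyc_def using N0_Cdeg by blast

lemma BN_sub_BC: "cobd (N0deg Cc d21 d01) D 1 \<subseteq> cobd (Cdeg Cc) D 1"
  unfolding cobd_def using N0_Cdeg by blast

lemma ZN_proj: "z \<in> N0deg Cc d21 d01 1 \<Longrightarrow> proj 1 z = 0"
  by (rule ext)+ (simp add: proj_apply N0_iff)

lemma ZC_kerproj: assumes "z \<in> cocyc (Cdeg Cc) D 1" "proj 1 z = 0"
  shows "z \<in> cocyc (N0deg Cc d21 d01) D 1"
proof -
  have zC: "z \<in> Cdeg Cc 1" and Dz: "D z = 0" using assms(1) unfolding cocyc_def by auto
  have e1: "z 0 1 = 0" using fun_cong[OF fun_cong[OF assms(2), of 0], of 1] by (simp add: proj_apply)
  have "D z 1 1 = 0" using Dz by simp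
  hence "d01 1 0 (z 1 0) = 0" using e1 by (simp add: D_apply Cdeg_neg[OF zC])
  thus ?thesis using N0_1_iff zC e1 Dz unfolding cocyc_def by blast
qed

lemma ZN_BC: assumes "z \<in> cocyc (N0deg Cc d21 d01) D 1" "z \<in> cobd (Cdeg Cc) D 1"
  shows "z \<in> cobd (N0deg Cc d21 d01) D 1"
proof -
  obtain x where x: "x \<in> Cdeg Cc 0" and z: "z = D x" using assms(2) unfolding cobd_def by auto
  have "z 0 1 = 0" using assms(1) unfolding cocyc_def N0_1_iff by blast
  hence "d01 0 0 (x 0 0) = 0" unfolding z by (simp add: D_apply Cdeg_neg[OF x])
  hence "x \<in> N0deg Cc d21 d01 0" using N0_0_iff x by blast
  thus ?thesis unfolding cobd_def z by simp
qed

lemma row1_ker: assumes "b \<in> cobd (Cdeg Cc) D 1" "proj 1 b = 0"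
  shows "b \<in> cobd (N0deg Cc d21 d01) D 1"
proof -
  obtain x where x: "x \<in> Cdeg Cc 0" and z: "b = D x" using assms(1) unfolding cobd_def by auto
  have D0: "Dop 0 1 d01 x = 0" using projD0[OF x] assms(2) z by simp
  have "d01 0 0 (x 0 0) = 0" using fun_cong[OF fun_cong[OF D0, of 0], of 1] by (simp add: Dop_def)
  hence "x \<in> N0deg Cc d21 d01 0" using N0_0_iff x by blast
  thus ?thesis unfolding cobd_def z by simp
qed

lemma BN_proj: "b \<in> cobd (N0deg Cc d21 d01) D 1 \<Longrightarrow> proj 1 b = 0"
  using BN_sub_ZN ZN_proj unfolding cocyc_def by blast

lemma B0_eq: "cobd (C0deg Cc) (Dop 0 1 d01) 1 = proj 1 ` cobd (Cdeg Cc) D 1"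
  unfolding B0_eq0 unfolding cobd_def using projD0 by (simp add: image_image)

lemma Deta: assumes "\<eta> \<in> Cdeg Cc 1" "proj 1 (D \<eta>) = 0"
  shows "D \<eta> = (\<lambda>p q. if p = 2 \<and> q = 0 then d21 0 1 (\<eta> 0 1) + d10 1 0 (\<eta> 1 0) else 0)"
proof (rule ext, rule ext)
  fix p q :: int
  have D2: "D \<eta> \<in> Cdeg Cc 2" using D_Cdeg[OF assms(1)] by simp
  consider "q \<ge> 1" | "q < 0" | "q = 0" by linarith
  thus "D \<eta> p q = (if p = 2 \<and> q = 0 then d21 0 1 (\<eta> 0 1) + d10 1 0 (\<eta> 1 0) else 0)"
  proof cases
    case 1 thus ?thesis using fun_cong[OF fun_cong[OF assms(2), of p], of q] by (simp add: proj_apply)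
  next
    case 2 thus ?thesis using Cdeg_neg[OF D2, of p q] by simp
  next
    case 3
    show ?thesis
    proof (cases "p = 2")
      case True thus ?thesis using 3 by (simp add: D_apply Cdeg_neg[OF assms(1)])
    next
      case False
      hence "p + q \<noteq> 2" using 3 by simp
      thus ?thesis using Cdeg_z[OF D2] False by simp
    qed
  qed
qed

lemma diffN0: assumes "\<eta> \<in> Cdeg Cc 1" "\<eta>2 \<in> Cdeg Cc 1" "proj 1 \<eta> = proj 1 \<eta>2"
  "proj 1 (D \<eta>) = 0" "proj 1 (D \<eta>2) = 0"
  shows "\<eta> - \<eta>2 \<in> N0deg Cc d21 d01 1"
proof -
  let ?w = "\<eta> - \<eta>2"
  have wC: "?w \<in> Cdeg Cc 1" using Cdeg_diff assms by blast
  have e1: "?w 0 1 = 0" using fun_cong[OF fun_cong[OF assms(3), of 0], of 1] by (simp add: proj_apply)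
  have P0: "proj 1 (D ?w) = 0" using D_diff[OF assms(1,2)] assms(4,5) by (simp add: proj_diff)
  have "D ?w 1 1 = 0" using fun_cong[OF fun_cong[OF P0, of 1], of 1] by (simp add: proj_apply)
  hence "d01 1 0 (?w 1 0) = 0" using e1 by (simp only: D_apply[of ?w 1 1]) (simp add: Cdeg_neg[OF wC] Cdeg_neg[OF assms(1)] Cdeg_neg[OF assms(2)])
  thus ?thesis using N0_1_iff wC e1 by blast
qed

lemma K_iff: "\<xi> \<in> ker_rho Cc d21 d10 d01 1 \<longleftrightarrow>
   (\<exists>\<eta>. \<eta> \<in> Cdeg Cc 1 \<and> proj 1 \<eta> = \<xi> \<and> proj 1 (D \<eta>) = 0 \<and> D \<eta> \<in> cobd (N0deg Cc d21 d01) D 2)"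
proof
  assume a: "\<xi> \<in> ker_rho Cc d21 d10 d01 1"
  hence "\<xi> \<in> Aset Cc d21 d10 d01 1" unfolding ker_rho_def by blast
  hence ex: "\<exists>\<eta>. \<eta> \<in> Cdeg Cc 1 \<and> proj 1 \<eta> = \<xi> \<and> proj 1 (D \<eta>) = 0" unfolding Aset_def by blast
  define \<eta>' where "\<eta>' = (SOME \<eta>. \<eta> \<in> Cdeg Cc 1 \<and> proj 1 \<eta> = \<xi> \<and> proj 1 (D \<eta>) = 0)"
  have h: "\<eta>' \<in> Cdeg Cc 1 \<and> proj 1 \<eta>' = \<xi> \<and> proj 1 (D \<eta>') = 0"
    unfolding \<eta>'_def by (rule someI_ex[OF ex])
  have x01: "\<xi> 0 1 = \<eta>' 0 1" using h by (auto simp: proj_apply)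
  have "rho Cc d21 d10 d01 1 \<xi> = coset (cobd (N0deg Cc d21 d01) D 2)
     (\<lambda>p q. if p = 2 \<and> q = 0 then d21 0 1 (\<xi> 0 1) + d10 1 0 (\<eta>' 1 0) else 0)"
    unfolding rho_def Let_def \<eta>'_def by (simp cong: if_cong)
  also have "\<dots> = coset (cobd (N0deg Cc d21 d01) D 2) (D \<eta>')"
    using Deta[of \<eta>'] h x01 by (simp cong: if_cong)
  finally have "coset (cobd (N0deg Cc d21 d01) D 2) (D \<eta>') = coset (cobd (N0deg Cc d21 d01) D 2) 0"
    using a unfolding ker_rho_def by simp
  hence "D \<eta>' \<in> cobd (N0deg Cc d21 d01) D 2" using coset_eq[OF sg_BN] by simp
  thus "\<exists>\<eta>. \<eta> \<in> Cdeg Cc 1 \<and> proj 1 \<eta> = \<xi> \<and> proj 1 (D \<eta>) = 0 \<and> D \<eta> \<in> cobd (N0deg Cc d21 d01) D 2"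
    using h by blast
next
  assume "\<exists>\<eta>. \<eta> \<in> Cdeg Cc 1 \<and> proj 1 \<eta> = \<xi> \<and> proj 1 (D \<eta>) = 0 \<and> D \<eta> \<in> cobd (N0deg Cc d21 d01) D 2"
  then obtain \<eta> where e: "\<eta> \<in> Cdeg Cc 1" "proj 1 \<eta> = \<xi>" "proj 1 (D \<eta>) = 0" "D \<eta> \<in> cobd (N0deg Cc d21 d01) D 2"
    by blast
  hence ex: "\<exists>\<eta>. \<eta> \<in> Cdeg Cc 1 \<and> proj 1 \<eta> = \<xi> \<and> proj 1 (D \<eta>) = 0" by blast
  hence A: "\<xi> \<in> Aset Cc d21 d10 d01 1" unfolding Aset_def by blast
  define \<eta>' where "\<eta>' = (SOME \<eta>. \<eta> \<in> Cdeg Cc 1 \<and> proj 1 \<eta> = \<xi> \<and> proj 1 (D \<eta>) = 0)"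
  have h: "\<eta>' \<in> Cdeg Cc 1 \<and> proj 1 \<eta>' = \<xi> \<and> proj 1 (D \<eta>') = 0"
    unfolding \<eta>'_def by (rule someI_ex[OF ex])
  have x01: "\<xi> 0 1 = \<eta>' 0 1" using h by (auto simp: proj_apply)
  have w: "\<eta>' - \<eta> \<in> N0deg Cc d21 d01 1" using diffN0[of \<eta>' \<eta>] h e by simp
  have "D (\<eta>' - \<eta>) \<in> cobd (N0deg Cc d21 d01) D 2" using w unfolding cobd_def by simp
  hence "D (\<eta>' - \<eta>) + D \<eta> \<in> cobd (N0deg Cc d21 d01) D 2" using e(4) sg_BN unfolding sg_def by blast
  hence Din: "D \<eta>' \<in> cobd (N0deg Cc d21 d01) D 2" using D_diff[of \<eta>' 1 \<eta>] h e by simp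
  have "rho Cc d21 d10 d01 1 \<xi> = coset (cobd (N0deg Cc d21 d01) D 2)
     (\<lambda>p q. if p = 2 \<and> q = 0 then d21 0 1 (\<xi> 0 1) + d10 1 0 (\<eta>' 1 0) else 0)"
    unfolding rho_def Let_def \<eta>'_def by (simp cong: if_cong)
  also have "\<dots> = coset (cobd (N0deg Cc d21 d01) D 2) (D \<eta>')"
    using Deta[of \<eta>'] h x01 by (simp cong: if_cong)
  also have "\<dots> = coset (cobd (N0deg Cc d21 d01) D 2) 0" using coset_eq[OF sg_BN] Din by simp
  finally show "\<xi> \<in> ker_rho Cc d21 d10 d01 1" unfolding ker_rho_def using A by simp
qed

lemma K_eq: "ker_rho Cc d21 d10 d01 1 = proj 1 ` cocyc (Cdeg Cc) D 1"
proof
  show "proj 1 ` cocyc (Cdeg Cc) D 1 \<subseteq> ker_rho Cc d21 d10 d01 1"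
  proof
    fix \<xi> assume "\<xi> \<in> proj 1 ` cocyc (Cdeg Cc) D 1"
    then obtain z where z: "z \<in> Cdeg Cc 1" "D z = 0" "\<xi> = proj 1 z" unfolding cocyc_def by auto
    have "0 \<in> cobd (N0deg Cc d21 d01) D 2" using sg_BN unfolding sg_def by blast
    thus "\<xi> \<in> ker_rho Cc d21 d10 d01 1" unfolding K_iff using z by auto
  qed
next
  show "ker_rho Cc d21 d10 d01 1 \<subseteq> proj 1 ` cocyc (Cdeg Cc) D 1"
  proof
    fix \<xi> assume "\<xi> \<in> ker_rho Cc d21 d10 d01 1"
    then obtain \<eta> where e: "\<eta> \<in> Cdeg Cc 1" "proj 1 \<eta> = \<xi>" "proj 1 (D \<eta>) = 0" "D \<eta> \<in> cobd (N0deg Cc d21 d01) D 2"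
      unfolding K_iff by blast
    then obtain w where w: "w \<in> N0deg Cc d21 d01 1" "D \<eta> = D w" unfolding cobd_def by auto
    have wC: "w \<in> Cdeg Cc 1" using w N0_Cdeg by blast
    have m1: "\<eta> - w \<in> cocyc (Cdeg Cc) D 1" unfolding cocyc_def
      using Cdeg_diff[OF e(1) wC] D_diff[OF e(1) wC] w by simp
    have m2: "proj 1 (\<eta> - w) = \<xi>" using ZN_proj[OF w(1)] e(2) by (simp add: proj_diff)
    show "\<xi> \<in> proj 1 ` cocyc (Cdeg Cc) D 1" by (rule image_eqI[where f="proj 1", OF sym[OF m2] m1])
  qed
qed

lemma K_0: "0 \<in> ker_rho Cc d21 d10 d01 1"
proof -
  have "0 \<in> cocyc (Cdeg Cc) D 1" using sg_ZC[of 1] unfolding sg_def by blast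
  hence "proj 1 0 \<in> proj 1 ` cocyc (Cdeg Cc) D 1" by (rule imageI)
  thus ?thesis by (simp add: K_eq)
qed

lemma B0_sub_K: "cobd (C0deg Cc) (Dop 0 1 d01) 1 \<subseteq> ker_rho Cc d21 d10 d01 1"
  unfolding B0_eq K_eq by (rule image_mono[OF BC_sub_ZC])

lemma main: "cobd (C0deg Cc) (Dop 0 1 d01) 1 \<subseteq> ker_rho Cc d21 d10 d01 1 \<and>
    (\<exists>f3 g3.
      short_exact (cobd (N0deg Cc d21 d01) D 1) (cobd (Cdeg Cc) D 1) (cobd (C0deg Cc) (Dop 0 1 d01) 1) id (proj 1) 0 0 0 \<and>
      short_exact (cocyc (N0deg Cc d21 d01) D 1) (cocyc (Cdeg Cc) D 1) (ker_rho Cc d21 d10 d01 1) id (proj 1) 0 0 0 \<and>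
      short_exact (cohom (N0deg Cc d21 d01) D 1) (cohom (Cdeg Cc) D 1) (quot (ker_rho Cc d21 d10 d01 1) (cobd (C0deg Cc) (Dop 0 1 d01) 1)) f3 g3
        (coset (cobd (N0deg Cc d21 d01) D 1) 0) (coset (cobd (Cdeg Cc) D 1) 0) (coset (cobd (C0deg Cc) (Dop 0 1 d01) 1) 0) \<and>
      short_exact (cobd (N0deg Cc d21 d01) D 1) (cocyc (N0deg Cc d21 d01) D 1) (cohom (N0deg Cc d21 d01) D 1) id (coset (cobd (N0deg Cc d21 d01) D 1)) 0 0
        (coset (cobd (N0deg Cc d21 d01) D 1) 0) \<and>
      short_exact (cobd (Cdeg Cc) D 1) (cocyc (Cdeg Cc) D 1) (cohom (Cdeg Cc) D 1) id
        (coset (cobd (Cdeg Cc) D 1)) 0 0 (coset (cobd (Cdeg Cc) D 1) 0) \<and>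
      short_exact (cobd (C0deg Cc) (Dop 0 1 d01) 1) (ker_rho Cc d21 d10 d01 1) (quot (ker_rho Cc d21 d10 d01 1) (cobd (C0deg Cc) (Dop 0 1 d01) 1)) id (coset (cobd (C0deg Cc) (Dop 0 1 d01) 1)) 0 0
        (coset (cobd (C0deg Cc) (Dop 0 1 d01) 1) 0) \<and>
      (\<forall>z \<in> cocyc (N0deg Cc d21 d01) D 1. f3 (coset (cobd (N0deg Cc d21 d01) D 1) z) = coset (cobd (Cdeg Cc) D 1) (id z)) \<and>
      (\<forall>z \<in> cocyc (Cdeg Cc) D 1. g3 (coset (cobd (Cdeg Cc) D 1) z) = coset (cobd (C0deg Cc) (Dop 0 1 d01) 1) (proj 1 z)))"
proof -
  define BN where "BN = cobd (N0deg Cc d21 d01) D 1"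
  define BC where "BC = cobd (Cdeg Cc) D 1"
  define B0 where "B0 = cobd (C0deg Cc) (Dop 0 1 d01) 1"
  define ZN where "ZN = cocyc (N0deg Cc d21 d01) D 1"
  define ZC where "ZC = cocyc (Cdeg Cc) D 1"
  define K where "K = ker_rho Cc d21 d10 d01 1"
  have sBN: "sg BN" unfolding BN_def by (rule sg_BN)
  have sBC: "sg BC" unfolding BC_def by (rule sg_BC)
  have sB0: "sg B0" unfolding B0_def by (rule sg_B0)
  have sZC: "sg ZC" unfolding ZC_def by (rule sg_ZC)
  have z1: "0 \<in> BN" using sBN unfolding sg_def by blast
  have z2: "0 \<in> BC" using sBC unfolding sg_def by blast
  have z3: "0 \<in> B0" using sB0 unfolding sg_def by blast
  have z4: "0 \<in> ZN" using sg_ZN[of 1] unfolding ZN_def sg_def by blast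
  have z5: "0 \<in> ZC" using sZC unfolding sg_def by blast
  have z6: "0 \<in> K" unfolding K_def by (rule K_0)
  have BN_ZN: "BN \<subseteq> ZN" unfolding BN_def ZN_def by (rule BN_sub_ZN)
  have BC_ZC: "BC \<subseteq> ZC" unfolding BC_def ZC_def by (rule BC_sub_ZC)
  have ZN_ZC: "ZN \<subseteq> ZC" unfolding ZN_def ZC_def by (rule ZN_sub_ZC)
  have BN_BC: "BN \<subseteq> BC" unfolding BN_def BC_def by (rule BN_sub_BC)
  have B0_K: "B0 \<subseteq> K" unfolding B0_def K_def by (rule B0_sub_K)
  have B0e: "B0 = proj 1 ` BC" unfolding B0_def BC_def by (rule B0_eq)
  have Ke: "K = proj 1 ` ZC" unfolding K_def ZC_def by (rule K_eq)
  have r1k: "b \<in> BN" if "b \<in> BC" "proj 1 b = 0" for b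
    using row1_ker that unfolding BN_def BC_def by blast
  have bnp: "proj 1 b = 0" if "b \<in> BN" for b using BN_proj that unfolding BN_def by blast
  have zck: "z \<in> ZN" if "z \<in> ZC" "proj 1 z = 0" for z
    using ZC_kerproj that unfolding ZN_def ZC_def by blast
  have znp: "proj 1 z = 0" if "z \<in> ZN" for z
    using ZN_proj that unfolding ZN_def cocyc_def by blast
  have znbc: "z \<in> BN" if "z \<in> ZN" "z \<in> BC" for z
    using ZN_BC that unfolding ZN_def BN_def BC_def by blast
  define f3 where "f3 = (\<lambda>X. coset BC (SOME x. x \<in> X))"
  define g3 where "g3 = (\<lambda>Y. coset B0 (proj 1 (SOME y. y \<in> Y)))"
  have f3c: "f3 (coset BN z) = coset BC z" for z
  proof -
    have "(SOME x. x \<in> coset BN z) - z \<in> BN" by (rule coset_some[OF sBN])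
    hence "(SOME x. x \<in> coset BN z) - z \<in> BC" using BN_BC by blast
    thus ?thesis unfolding f3_def using coset_eq[OF sBC] by simp
  qed
  have g3c: "g3 (coset BC z) = coset B0 (proj 1 z)" for z
  proof -
    have "(SOME x. x \<in> coset BC z) - z \<in> BC" by (rule coset_some[OF sBC])
    hence "proj 1 ((SOME x. x \<in> coset BC z) - z) \<in> B0" unfolding B0e by (rule imageI)
    hence "proj 1 (SOME x. x \<in> coset BC z) - proj 1 z \<in> B0" by (simp add: proj_diff)
    thus ?thesis unfolding g3_def using coset_eq[OF sB0] by blast
  qed
  have row1: "short_exact BN BC B0 id (proj 1) 0 0 0"
    unfolding short_exact_def
  proof (intro conjI)
    show "id ` BN \<subseteq> BC" using BN_BC by simp
    show "proj 1 ` BC \<subseteq> B0" using B0e by simp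
    show "{a \<in> BN. id a = 0} = {0}" using z1 by auto
    show "{b \<in> BC. proj 1 b = 0} = id ` BN" using r1k bnp BN_BC by auto
    show "proj 1 ` BC = B0" using B0e by simp
  qed (fact z1 z2 z3)+
  have row2: "short_exact ZN ZC K id (proj 1) 0 0 0"
    unfolding short_exact_def
  proof (intro conjI)
    show "id ` ZN \<subseteq> ZC" using ZN_ZC by simp
    show "proj 1 ` ZC \<subseteq> K" using Ke by simp
    show "{a \<in> ZN. id a = 0} = {0}" using z4 by auto
    show "{b \<in> ZC. proj 1 b = 0} = id ` ZN" using zck znp ZN_ZC by auto
    show "proj 1 ` ZC = K" using Ke by simp
  qed (fact z4 z5 z6)+
  have row3: "short_exact (quot ZN BN) (quot ZC BC) (quot K B0) f3 g3
        (coset BN 0) (coset BC 0) (coset B0 0)"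
    unfolding short_exact_def
  proof (intro conjI)
    show "coset BN 0 \<in> quot ZN BN" unfolding quot_def using z4 by (rule imageI)
    show "coset BC 0 \<in> quot ZC BC" unfolding quot_def using z5 by (rule imageI)
    show "coset B0 0 \<in> quot K B0" unfolding quot_def using z6 by (rule imageI)
    show "f3 ` quot ZN BN \<subseteq> quot ZC BC" unfolding quot_def using f3c ZN_ZC by auto
    show "g3 ` quot ZC BC \<subseteq> quot K B0" unfolding quot_def using g3c Ke by auto
    show "g3 ` quot ZC BC = quot K B0" unfolding quot_def using g3c Ke by auto
    show "{a \<in> quot ZN BN. f3 a = coset BC 0} = {coset BN 0}"
    proof
      show "{a \<in> quot ZN BN. f3 a = coset BC 0} \<subseteq> {coset BN 0}"
      proof clarify
        fix a assume a: "a \<in> quot ZN BN" "f3 a = coset BC 0"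
        then obtain z where z: "z \<in> ZN" "a = coset BN z" unfolding quot_def by auto
        have "coset BC z = coset BC 0" using a(2) f3c z(2) by simp
        hence "z \<in> BC" using coset_eq[OF sBC] by simp
        hence "z \<in> BN" using znbc z(1) by blast
        thus "a = coset BN 0" using z(2) coset_eq[OF sBN] by simp
      qed
      show "{coset BN 0} \<subseteq> {a \<in> quot ZN BN. f3 a = coset BC 0}"
        unfolding quot_def using z4 f3c by auto
    qed
    show "{b \<in> quot ZC BC. g3 b = coset B0 0} = f3 ` quot ZN BN"
    proof
      show "{b \<in> quot ZC BC. g3 b = coset B0 0} \<subseteq> f3 ` quot ZN BN"
      proof clarify
        fix b assume b: "b \<in> quot ZC BC" "g3 b = coset B0 0"
        then obtain z where z: "z \<in> ZC" "b = coset BC z" unfolding quot_def by auto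
        have "coset B0 (proj 1 z) = coset B0 0" using b(2) g3c z(2) by simp
        hence "proj 1 z \<in> B0" using coset_eq[OF sB0] by simp
        then obtain c where c: "c \<in> BC" "proj 1 z = proj 1 c" using B0e by auto
        have "z - c \<in> ZC" using sg_diff[OF sZC z(1)] c(1) BC_ZC by blast
        moreover have "proj 1 (z - c) = 0" using c(2) by (simp add: proj_diff)
        ultimately have zc: "z - c \<in> ZN" using zck by blast
        have "b = coset BC (z - c)" using z(2) coset_eq[OF sBC] c(1) by simp
        also have "\<dots> = f3 (coset BN (z - c))" using f3c by simp
        finally show "b \<in> f3 ` quot ZN BN" unfolding quot_def using zc by blast
      qed
      show "f3 ` quot ZN BN \<subseteq> {b \<in> quot ZC BC. g3 b = coset B0 0}"
      proof
        fix b assume "b \<in> f3 ` quot ZN BN"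
        then obtain z where z: "z \<in> ZN" "b = f3 (coset BN z)" unfolding quot_def by auto
        have p: "proj 1 z = 0" using z znp by blast
        have b1: "b = coset BC z" using f3c z(2) by simp
        have b2: "g3 b = coset B0 0" using g3c b1 p by simp
        have "b \<in> quot ZC BC" unfolding quot_def using b1 z(1) ZN_ZC by blast
        thus "b \<in> {b \<in> quot ZC BC. g3 b = coset B0 0}" using b2 by blast
      qed
    qed
  qed
  have c1: "short_exact BN ZN (quot ZN BN) id (coset BN) 0 0 (coset BN 0)" by (rule column[OF sBN BN_ZN])
  have c2: "short_exact BC ZC (quot ZC BC) id (coset BC) 0 0 (coset BC 0)" by (rule column[OF sBC BC_ZC])
  have c3: "short_exact B0 K (quot K B0) id (coset B0) 0 0 (coset B0 0)" by (rule column[OF sB0 B0_K])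
  have m1: "\<forall>z \<in> ZN. f3 (coset BN z) = coset BC (id z)" using f3c by simp
  have m2: "\<forall>z \<in> ZC. g3 (coset BC z) = coset B0 (proj 1 z)" using g3c by simp
  have "B0 \<subseteq> K \<and> (\<exists>f3 g3. short_exact BN BC B0 id (proj 1) 0 0 0 \<and>
      short_exact ZN ZC K id (proj 1) 0 0 0 \<and>
      short_exact (quot ZN BN) (quot ZC BC) (quot K B0) f3 g3 (coset BN 0) (coset BC 0) (coset B0 0) \<and>
      short_exact BN ZN (quot ZN BN) id (coset BN) 0 0 (coset BN 0) \<and>
      short_exact BC ZC (quot ZC BC) id (coset BC) 0 0 (coset BC 0) \<and>
      short_exact B0 K (quot K B0) id (coset B0) 0 0 (coset B0 0) \<and>
      (\<forall>z \<in> ZN. f3 (coset BN z) = coset BC (id z)) \<and>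
      (\<forall>z \<in> ZC. g3 (coset BC z) = coset B0 (proj 1 z)))"
    using B0_K row1 row2 row3 c1 c2 c3 m1 m2 by blast
  thus ?thesis by (simp only: BN_def BC_def B0_def ZN_def ZC_def K_def cohom_def)
qed

end

theorem theorem5p3:
  fixes s :: "'r::ring_1 \<Rightarrow> 'm::ab_group_add \<Rightarrow> 'm"
    and Cc :: "int \<Rightarrow> int \<Rightarrow> 'm set"
    and d21 d10 d01 :: "int \<Rightarrow> int \<Rightarrow> 'm \<Rightarrow> 'm"
  assumes "bigraded_complex s Cc d21 d10 d01"
  defines "D \<equiv> Dtot d21 d10 d01"
    and "D01 \<equiv> Dop 0 1 d01"
    and "N0 \<equiv> N0deg Cc d21 d01"
    and "C0 \<equiv> C0deg Cc"
    and "K \<equiv> ker_rho Cc d21 d10 d01 1"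
  shows "cobd C0 D01 1 \<subseteq> K \<and>
    (\<exists>f3 g3.
      \<comment> \<open>rows\<close>
      short_exact (cobd N0 D 1) (cobd (Cdeg Cc) D 1) (cobd C0 D01 1) id (proj 1) 0 0 0 \<and>
      short_exact (cocyc N0 D 1) (cocyc (Cdeg Cc) D 1) K id (proj 1) 0 0 0 \<and>
      short_exact (cohom N0 D 1) (cohom (Cdeg Cc) D 1) (quot K (cobd C0 D01 1)) f3 g3
        (coset (cobd N0 D 1) 0) (coset (cobd (Cdeg Cc) D 1) 0) (coset (cobd C0 D01 1) 0) \<and>
      \<comment> \<open>columns\<close>
      short_exact (cobd N0 D 1) (cocyc N0 D 1) (cohom N0 D 1) id (coset (cobd N0 D 1)) 0 0
        (coset (cobd N0 D 1) 0) \<and>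
      short_exact (cobd (Cdeg Cc) D 1) (cocyc (Cdeg Cc) D 1) (cohom (Cdeg Cc) D 1) id
        (coset (cobd (Cdeg Cc) D 1)) 0 0 (coset (cobd (Cdeg Cc) D 1) 0) \<and>
      short_exact (cobd C0 D01 1) K (quot K (cobd C0 D01 1)) id (coset (cobd C0 D01 1)) 0 0
        (coset (cobd C0 D01 1) 0) \<and>
      \<comment> \<open>commutativity (upper squares commute trivially; lower squares:)\<close>
      (\<forall>z \<in> cocyc N0 D 1. f3 (coset (cobd N0 D 1) z) = coset (cobd (Cdeg Cc) D 1) (id z)) \<and>
      (\<forall>z \<in> cocyc (Cdeg Cc) D 1. g3 (coset (cobd (Cdeg Cc) D 1) z) = coset (cobd C0 D01 1) (proj 1 z)))"
  proof -
  interpret bc s Cc d21 d10 d01 by (rule bc.intro[OF assms(1)])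
  show ?thesis unfolding D_def D01_def N0_def C0_def K_def by (rule main)
qed

end
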